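(* Let $\mathbb F=(\mathcal F_t)_{t\ge0}$ be a filtration and $\mathbb T=\{t_0,t_1,\dots,t_n\}$ with $0=t_0<t_1<\dots<t_n=\infty$ such that $\mathcal F_t=\mathcal F_{t_{i(t)}}$ for all $t\ge0$, where $i(t)=\max\{i:t_i\le t\}$. Let $\tau$ be an $(\mathbb F,\mathbb T)$-stopping time, let $\gamma>0$, and define $U_t=e^{-\gamma t}\mathbf 1_{\{t<\tau\}}$. Then there exists a proper solution $W$ associated to $(h_{EZ},U,\mathbb F)$ such that $$W_t\ge\Big(\frac{1}{\gamma\theta}\mathbb E\big[e^{-\gamma t}-e^{-\gamma(t\vee\tau)}\,\big|\,\mathcal F_t\big]\Big)^\theta\quad\text{for all }t\ge0.$$
   Context: Let $(\Omega,\mathcal F,\mathbb P)$ be a probability space. $\theta>1$ is fixed and $\rho=\frac{\theta-1}{\theta}$; $h_{EZ}(u,w)=uw^\rho$. An $(\mathbb F,\mathbb T)$-stopping time is an $\mathbb F$-stopping time $\tau$ that can be written as $\tau=\sum_{i=0}^n t_i\mathbf 1_{A_i}$ for disjoint sets $A_0,\dots,A_n$ with $A_i\in\mathcal F_{t_i}$ and $\mathbb P(\bigcup_iA_i)=1$. For a nonnegative $\mathbb F$-progressively measurable $U$, a solution associated to $(h_{EZ},U,\mathbb F)$ is a nonnegative càdlàg $\mathbb F$-progressively measurable $W$ with $\mathbb E\int_0^\infty U_sW_s^\rho ds<\infty$ and $W_t=\mathbb E[\int_t^\infty U_sW_s^\rho ds\mid\mathcal F_t]$ for all $t\ge0$;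 it is proper if for every $t\ge0$, up to null sets, $W_t>0$ on $\{\mathbb E[\int_t^\infty U_s^\theta ds\mid\mathcal F_t]>0\}$. *)

theory Defs
  imports "HOL-Probability.Probability"
begin

definition filtration_on :: "'a measure \<Rightarrow> (real \<Rightarrow> 'a measure) \<Rightarrow> bool" where
  "filtration_on M F \<longleftrightarrow>
     (\<forall>t\<ge>0. subalgebra M (F t)) \<and> (\<forall>s t. 0 \<le> s \<longrightarrow> s \<le> t \<longrightarrow> sets (F s) \<subseteq> sets (F t))"

definition prog_measurable :: "'a measure \<Rightarrow> (real \<Rightarrow> 'a measure) \<Rightarrow> (real \<Rightarrow> 'a \<Rightarrow> real) \<Rightarrow> bool" where
  "prog_measurable M F X \<longleftrightarrow>
     (\<forall>t\<ge>0. (\<lambda>(s, x). X s x) \<in> borel_measurable (restrict_space borel {0..t} \<Otimes>\<^sub>M F t))"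

definition cadlag_on :: "'a measure \<Rightarrow> (real \<Rightarrow> 'a \<Rightarrow> real) \<Rightarrow> bool" where
  "cadlag_on M X \<longleftrightarrow>
     (\<forall>x\<in>space M. \<forall>t\<ge>0. continuous (at_right t) (\<lambda>s. X s x) \<and>
        (0 < t \<longrightarrow> (\<exists>l. ((\<lambda>s. X s x) \<longlongrightarrow> l) (at_left t))))"

definition h_EZ :: "real \<Rightarrow> real \<Rightarrow> real \<Rightarrow> real" where
  "h_EZ \<theta> u w = u * w powr ((\<theta> - 1) / \<theta>)"

definition EZ_solution ::
  "'a measure \<Rightarrow> (real \<Rightarrow> 'a measure) \<Rightarrow> real \<Rightarrow> (real \<Rightarrow> 'a \<Rightarrow> real) \<Rightarrow> (real \<Rightarrow> 'a \<Rightarrow> real) \<Rightarrow> bool" where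
  "EZ_solution M F \<theta> U W \<longleftrightarrow>
     (\<forall>t\<ge>0. \<forall>x\<in>space M. 0 \<le> W t x) \<and> cadlag_on M W \<and> prog_measurable M F W \<and>
     (\<integral>\<^sup>+ x. (\<integral>\<^sup>+ s. ennreal (indicator {0..} s * h_EZ \<theta> (U s x) (W s x)) \<partial>lborel) \<partial>M) < \<infinity> \<and>
     (\<forall>t\<ge>0. AE x in M. ennreal (W t x) =
        nn_cond_exp M (F t) (\<lambda>y. \<integral>\<^sup>+ s. ennreal (indicator {t..} s * h_EZ \<theta> (U s y) (W s y)) \<partial>lborel) x)"

definition proper_EZ_solution ::
  "'a measure \<Rightarrow> (real \<Rightarrow> 'a measure) \<Rightarrow> real \<Rightarrow> (real \<Rightarrow> 'a \<Rightarrow> real) \<Rightarrow> (real \<Rightarrow> 'a \<Rightarrow> real) \<Rightarrow> bool" where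
  "proper_EZ_solution M F \<theta> U W \<longleftrightarrow> EZ_solution M F \<theta> U W \<and>
     (\<forall>t\<ge>0. AE x in M.
        0 < nn_cond_exp M (F t) (\<lambda>y. \<integral>\<^sup>+ s. ennreal (indicator {t..} s * U s y powr \<theta>) \<partial>lborel) x
        \<longrightarrow> 0 < W t x)"

text \<open>(F,T)-stopping time, T = {tt 0, ..., tt n} with tt n = \<infinity>; values in [0,\<infinity>].
  tau = sum_i tt i * 1_{A i}: tau = tt i on A i, tau = 0 off the union of the A i.\<close>
definition FT_stopping_time ::
  "'a measure \<Rightarrow> (real \<Rightarrow> 'a measure) \<Rightarrow> (nat \<Rightarrow> ereal) \<Rightarrow> nat \<Rightarrow> ('a \<Rightarrow> ereal) \<Rightarrow> bool" where
  "FT_stopping_time M F tt n \<tau> \<longleftrightarrow>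
     (\<forall>t\<ge>0. {x \<in> space M. \<tau> x \<le> ereal t} \<in> sets (F t)) \<and>
     (\<exists>A :: nat \<Rightarrow> 'a set.
        (\<forall>i<n. A i \<in> sets (F (real_of_ereal (tt i)))) \<and> A n \<in> sets M \<and>
        disjoint_family_on A {0..n} \<and>
        measure M (\<Union>i\<in>{0..n}. A i) = 1 \<and>
        (\<forall>i\<le>n. \<forall>x\<in>A i \<inter> space M. \<tau> x = tt i) \<and>
        (\<forall>x\<in>space M - (\<Union>i\<in>{0..n}. A i). \<tau> x = 0))"

end

theory Submission
  imports Defs
begin
lemma ftc_piece:
  fixes \<gamma> \<theta> \<kappa> C t eT :: real and T :: ereal
  assumes g: "\<gamma> > 0" "\<theta> > 1" "\<kappa> = 1/(\<gamma>*\<theta>)" "C \<ge> 0" "ereal t < T"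
   and eT: "eT = (case T of ereal y \<Rightarrow> exp(-\<gamma>*y) | _ \<Rightarrow> 0)"
  shows "(\<integral>\<^sup>+ s. ennreal (indicator {s. t \<le> s \<and> ereal s < T} s * (exp(-\<gamma>* s) * (C + \<kappa>*(exp(-\<gamma>* s) - eT)) powr (\<theta>-1))) \<partial>lborel)
       = ennreal ((C + \<kappa>*(exp(-\<gamma>*t) - eT)) powr \<theta> - (C powr \<theta>))"
proof -
  define B where "B s = C + \<kappa>*(exp(-\<gamma>* s) - eT)" for s
  define Fn where "Fn s = - ((B s) powr \<theta>)" for s
  define fn where "fn s = exp(-\<gamma>* s) * B s powr (\<theta>-1)" for s
  have kp: "\<kappa> > 0" using g by simp
  have eTlt: "eT < exp(-\<gamma>* s)" if "ereal s < T" for s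
    using that g by (cases T) (auto simp: eT)
  have eTle: "eT \<le> exp(-\<gamma>* s)" if "ereal s \<le> T" for s
    using that g by (cases T) (auto simp: eT)
  have Bpos: "B s > 0" if "ereal s < T" for s
    using eTlt[OF that] kp g(4) unfolding B_def by (smt (verit) mult_pos_pos)
  have Bnn: "B s \<ge> 0" if "ereal s \<le> T" for s
    using eTle[OF that] kp g(4) unfolding B_def by (smt (verit) mult_nonneg_nonneg)
  have contB: "continuous_on UNIV B" unfolding B_def by (intro continuous_intros)
  have derB: "(B has_real_derivative (\<kappa> * (- \<gamma> * exp(-\<gamma>* s)))) (at s)" for s
    unfolding B_def by (auto intro!: derivative_eq_intros)
  have deriv: "DERIV Fn s :> fn s" if "ereal t < ereal s" "ereal s < T" for s
  proof -
    have "((\<lambda>s. B s powr \<theta>) has_real_derivative (\<theta> * B s powr (\<theta> - 1) * (\<kappa> * (- \<gamma> * exp(-\<gamma>* s))))) (at s)"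
      using DERIV_fun_powr[OF derB Bpos[OF that(2)], of \<theta>] by simp
    then have "((\<lambda>s. - (B s powr \<theta>)) has_real_derivative - (\<theta> * B s powr (\<theta> - 1) * (\<kappa> * (- \<gamma> * exp(-\<gamma>* s))))) (at s)"
      by (rule derivative_intros)
    moreover have "- (\<theta> * B s powr (\<theta> - 1) * (\<kappa> * (- \<gamma> * exp(-\<gamma>* s)))) = fn s"
      using g unfolding fn_def by (simp add: field_simps)
    ultimately show ?thesis unfolding Fn_def by simp
  qed
  have cont: "isCont fn s" if "ereal t < ereal s" "ereal s < T" for s
    unfolding fn_def using Bpos[OF that(2)] contB
    by (auto intro!: continuous_intros continuous_at_imp_continuous_on simp: continuous_on_eq_continuous_at)
  have nn: "AE s in lborel. ereal t < ereal s \<longrightarrow> ereal s < T \<longrightarrow> 0 \<le> fn s"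
    unfolding fn_def by auto
  have A: "((Fn \<circ> real_of_ereal) \<longlongrightarrow> Fn t) (at_right (ereal t))"
  proof -
    have "isCont Fn t" unfolding Fn_def using Bpos[OF g(5)] contB
      by (auto intro!: continuous_intros simp: continuous_on_eq_continuous_at)
    then have "(Fn \<longlongrightarrow> Fn t) (at_right t)"
      by (simp add: filterlim_at_split isCont_def)
    then show ?thesis by (simp add: ereal_tendsto_simps1)
  qed
  have Bl: "((Fn \<circ> real_of_ereal) \<longlongrightarrow> - (C powr \<theta>)) (at_left T)"
  proof (cases T)
    case (real y)
    have By: "B y = C" using real g unfolding B_def eT by simp
    have "(B \<longlongrightarrow> C) (at_left y)" using contB By
      by (metis UNIV_I continuous_on_def filterlim_at_split tendsto_within_subset subset_UNIV)
    moreover have "\<forall>\<^sub>F s in at_left y. 0 \<le> B s"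
      by (rule eventually_at_leftI[of "y-1"]) (use Bnn real in auto)
    ultimately have "((\<lambda>s. B s powr \<theta>) \<longlongrightarrow> C powr \<theta>) (at_left y)"
      using g by (intro tendsto_powr2) auto
    then have "(Fn \<longlongrightarrow> - (C powr \<theta>)) (at_left y)" unfolding Fn_def by (rule tendsto_minus)
    then show ?thesis using real by (simp add: ereal_tendsto_simps1)
  next
    case PInf
    have e0: "eT = 0" using PInf eT by simp
    have "filterlim (\<lambda>x. \<gamma> * x) at_top at_top" using g
      by (intro filterlim_tendsto_pos_mult_at_top[OF tendsto_const] filterlim_ident) auto
    then have "filterlim (\<lambda>x. -(\<gamma> * x)) at_bot at_top" by (simp add: filterlim_uminus_at_bot)
    then have "((\<lambda>s. exp(-\<gamma>* s)) \<longlongrightarrow> 0) at_top"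
      by (auto intro: filterlim_compose[OF exp_at_bot])
    then have "(B \<longlongrightarrow> C + \<kappa>*(0 - 0)) at_top" unfolding B_def e0 by (intro tendsto_intros)
    moreover have "\<forall>\<^sub>F s in at_top. 0 \<le> B s" using Bnn PInf by simp
    ultimately have "((\<lambda>s. B s powr \<theta>) \<longlongrightarrow> C powr \<theta>) at_top"
      using g by (intro tendsto_powr2) auto
    then have "(Fn \<longlongrightarrow> - (C powr \<theta>)) at_top" unfolding Fn_def by (rule tendsto_minus)
    then show ?thesis using PInf by (simp add: ereal_tendsto_simps1)
  next
    case MInf then show ?thesis using g by simp
  qed
  note FTC = interval_integral_FTC_nonneg[OF g(5) deriv cont nn A Bl]
  have si: "set_integrable lborel (einterval t T) fn" using FTC(1) .
  have int: "integrable lborel (\<lambda>s. indicator (einterval t T) s * fn s)"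
    using si unfolding set_integrable_def by simp
  have val: "(\<integral>s. indicator (einterval t T) s * fn s \<partial>lborel) = B t powr \<theta> - (C powr \<theta>)"
    using FTC(2) g(5) unfolding interval_lebesgue_integral_def set_lebesgue_integral_def Fn_def
    by (simp add: less_imp_le)
  have "(\<integral>\<^sup>+ s. ennreal (indicator (einterval t T) s * fn s) \<partial>lborel) = ennreal (B t powr \<theta> - (C powr \<theta>))"
    using nn_integral_eq_integral[OF int] val unfolding fn_def by (simp add: indicator_def)
  moreover have "(\<integral>\<^sup>+ s. ennreal (indicator {s. t \<le> s \<and> ereal s < T} s * fn s) \<partial>lborel)
      = (\<integral>\<^sup>+ s. ennreal (indicator (einterval t T) s * fn s) \<partial>lborel)"
    by (rule nn_integral_cong_AE, use AE_lborel_singleton[of t] in eventually_elim)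
       (auto simp: einterval_iff indicator_def)
  ultimately show ?thesis unfolding fn_def B_def by simp
qed

lemma nn_cond_exp_sets_eq:
  assumes "subalgebra M A" "subalgebra M B" "sets A = sets B"
  shows "nn_cond_exp M A = nn_cond_exp M B"
  using assms unfolding nn_cond_exp_def restr_to_subalg_def subalgebra_def by (simp add: fun_eq_iff)

lemma real_cond_exp_sets_eq:
  assumes "subalgebra M A" "subalgebra M B" "sets A = sets B"
  shows "real_cond_exp M A = real_cond_exp M B"
  using nn_cond_exp_sets_eq[OF assms] unfolding real_cond_exp_def by (simp add: fun_eq_iff)

lemma measurable_codom_sub:
  assumes "f \<in> measurable X A" "space B = space A" "sets B \<subseteq> sets A"
  shows "f \<in> measurable X B"
  using assms unfolding measurable_def by auto

lemma pair_sub_meas: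
  assumes "space A = space B" "sets B \<subseteq> sets A" "g \<in> borel_measurable (N \<Otimes>\<^sub>M B)"
  shows "g \<in> borel_measurable (N \<Otimes>\<^sub>M A)"
proof -
  have "(\<lambda>p. p) \<in> measurable (N \<Otimes>\<^sub>M A) (N \<Otimes>\<^sub>M B)"
    unfolding measurable_pair_iff
    using measurable_codom_sub[OF measurable_snd[of N A], of B] assms by (simp add: o_def)
  from measurable_compose[OF this assms(3)] show ?thesis by simp
qed

locale EZ =
  fixes M :: "'a measure" and F :: "real \<Rightarrow> 'a measure" and tt :: "nat \<Rightarrow> ereal" and n :: nat
    and \<tau> :: "'a \<Rightarrow> ereal" and \<theta> \<gamma> :: real
  assumes prob: "prob_space M" and th: "\<theta> > 1" and filt: "filtration_on M F"
    and tt0: "tt 0 = 0" and ttmono: "\<forall>i<n. tt i < tt (Suc i)" and ttn: "tt n = \<infinity>"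
    and Fc: "\<forall>s\<ge>0. \<forall>i<n. tt i \<le> ereal s \<and> ereal s < tt (Suc i) \<longrightarrow>
            sets (F s) = sets (F (real_of_ereal (tt i)))"
    and ST: "FT_stopping_time M F tt n \<tau>" and gam: "\<gamma> > 0"
begin

lemma n_pos: "n > 0" using tt0 ttn by (cases n) auto

lemma tt_strict: "i < j \<Longrightarrow> j \<le> n \<Longrightarrow> tt i < tt j"
proof (induction j)
  case 0 then show ?case by simp
next
  case (Suc j)
  then show ?case
  proof (cases "i = j")
    case True then show ?thesis using Suc ttmono by auto
  next
    case False
    then have "tt i < tt j" using Suc by auto
    also have "tt j < tt (Suc j)" using Suc ttmono by auto
    finally show ?thesis .
  qed
qed

lemma tt_mono: "i \<le> j \<Longrightarrow> j \<le> n \<Longrightarrow> tt i \<le> tt j"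
  using tt_strict by (cases "i = j") (auto intro: less_imp_le)

lemma tt_nonneg: "i \<le> n \<Longrightarrow> 0 \<le> tt i"
  using tt_mono[of 0 i] tt0 by simp

definition r :: "nat \<Rightarrow> real" where "r i = real_of_ereal (tt i)"

lemma tt_fin: "i < n \<Longrightarrow> tt i = ereal (r i)"
proof -
  assume "i < n"
  then have "tt i < \<infinity>" using tt_strict[of i n] ttn by auto
  moreover have "0 \<le> tt i" using tt_nonneg \<open>i<n\<close> by simp
  ultimately show ?thesis unfolding r_def by (cases "tt i") auto
qed

lemma r_nonneg: "i < n \<Longrightarrow> 0 \<le> r i"
  using tt_fin[of i] tt_nonneg[of i] by simp

lemma r_mono: "i \<le> j \<Longrightarrow> j < n \<Longrightarrow> r i \<le> r j"
  using tt_mono[of i j] tt_fin[of i] tt_fin[of j] by simp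

lemma tau_vals: "x \<in> space M \<Longrightarrow> \<exists>i\<le>n. \<tau> x = tt i"
proof -
  assume x: "x \<in> space M"
  obtain A where A: "\<forall>i\<le>n. \<forall>x\<in>A i \<inter> space M. \<tau> x = tt i"
      "\<forall>x\<in>space M - (\<Union>i\<in>{0..n}. A i). \<tau> x = 0"
    using ST unfolding FT_stopping_time_def by blast
  show ?thesis
  proof (cases "x \<in> (\<Union>i\<in>{0..n}. A i)")
    case True then show ?thesis using A(1) x by auto
  next
    case False then show ?thesis using A(2) x tt0 by (intro exI[of _ 0]) auto
  qed
qed

lemma tau_nonneg: "x \<in> space M \<Longrightarrow> 0 \<le> \<tau> x"
proof -
  assume "x \<in> space M"
  then obtain i where "i \<le> n" "\<tau> x = tt i" using tau_vals by blast
  then show ?thesis using tt_nonneg[of i] by simp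
qed

lemma K:
  assumes "x \<in> space M" "i < n" "tt i \<le> ereal s" "ereal s < tt (Suc i)"
  shows "(ereal s < \<tau> x) = (tt i < \<tau> x)"
proof -
  obtain j where j: "j \<le> n" "\<tau> x = tt j" using tau_vals[OF assms(1)] by blast
  show ?thesis
  proof (cases "j \<le> i")
    case True
    then have "tt j \<le> tt i" using tt_mono assms(2) by simp
    then show ?thesis using j assms by auto
  next
    case False
    then have "tt (Suc i) \<le> tt j" using tt_mono j by simp
    moreover have "tt i < tt j" using tt_strict False j by simp
    ultimately show ?thesis using j assms by auto
  qed
qed

lemma interval_ex:
  assumes "0 \<le> s" shows "\<exists>i<n. tt i \<le> ereal s \<and> ereal s < tt (Suc i)"
proof -
  define S where "S = {i. i < n \<and> tt i \<le> ereal s}"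
  have fin: "finite S" unfolding S_def by simp
  have "0 \<in> S" unfolding S_def using n_pos tt0 assms by simp
  then have ne: "S \<noteq> {}" by blast
  define i where "i = Max S"
  have iS: "i \<in> S" unfolding i_def using Max_in[OF fin ne] .
  then have i1: "i < n" "tt i \<le> ereal s" unfolding S_def by auto
  have "ereal s < tt (Suc i)"
  proof (cases "Suc i < n")
    case True
    have "Suc i \<notin> S"
    proof
      assume "Suc i \<in> S"
      then have "Suc i \<le> Max S" using Max_ge[OF fin] by blast
      then show False unfolding i_def by simp
    qed
    then have "\<not> tt (Suc i) \<le> ereal s" using True unfolding S_def by blast
    then show ?thesis by simp
  next
    case False
    then have "Suc i = n" using i1 by simp
    then show ?thesis using ttn by simp
  qed
  then show ?thesis using i1 by blast
qed

lemma interval_unique: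
  assumes "i < n" "j < n" "tt i \<le> ereal s" "ereal s < tt (Suc i)" "tt j \<le> ereal s" "ereal s < tt (Suc j)"
  shows "i = j"
proof (rule ccontr)
  assume "i \<noteq> j"
  then consider "i < j" | "j < i" by linarith
  then show False
  proof cases
    case 1 then have "tt (Suc i) \<le> tt j" using tt_mono assms by simp
    then show False using assms by auto
  next
    case 2 then have "tt (Suc j) \<le> tt i" using tt_mono assms by simp
    then show False using assms by auto
  qed
qed

lemma subalg_F: "0 \<le> t \<Longrightarrow> subalgebra M (F t)"
  using filt unfolding filtration_on_def by auto

lemma F_mono: "0 \<le> s \<Longrightarrow> s \<le> t \<Longrightarrow> sets (F s) \<subseteq> sets (F t)"
  using filt unfolding filtration_on_def by auto

lemma space_F: "0 \<le> t \<Longrightarrow> space (F t) = space M"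
  using subalg_F unfolding subalgebra_def by auto

abbreviation G :: "nat \<Rightarrow> 'a measure" where "G i \<equiv> F (r i)"

lemma subalg_G: "i < n \<Longrightarrow> subalgebra M (G i)"
  using subalg_F r_nonneg by auto

lemma t_nonneg_interval: "i < n \<Longrightarrow> tt i \<le> ereal t \<Longrightarrow> 0 \<le> t"
proof -
  assume a: "i < n" "tt i \<le> ereal t"
  have "0 \<le> tt i" using tt_nonneg[of i] a by simp
  then have "0 \<le> ereal t" using a(2) by (rule order_trans)
  then show ?thesis by simp
qed

lemma sets_F_interval:
  assumes "i < n" "tt i \<le> ereal t" "ereal t < tt (Suc i)"
  shows "sets (F t) = sets (G i)"
proof -
  have "0 \<le> t" using t_nonneg_interval assms by blast
  then show ?thesis using Fc assms unfolding r_def by blast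
qed

lemma pred_tau_G:
  assumes "i < n" shows "Measurable.pred (G i) (\<lambda>x. tt i < \<tau> x)"
proof -
  have "{x\<in>space M. \<tau> x \<le> ereal (r i)} \<in> sets (G i)"
    using ST r_nonneg[OF assms] unfolding FT_stopping_time_def by blast
  then have "space (G i) - {x\<in>space M. \<tau> x \<le> ereal (r i)} \<in> sets (G i)" by auto
  moreover have "space (G i) - {x\<in>space M. \<tau> x \<le> ereal (r i)} = {x\<in>space (G i). tt i < \<tau> x}"
    using space_F[OF r_nonneg[OF assms]] tt_fin[OF assms] by auto
  ultimately show ?thesis unfolding pred_def by simp
qed

lemma tau_meas: "\<tau> \<in> borel_measurable M"
proof (rule borel_measurableI_le)
  fix y :: ereal
  show "{x \<in> space M. \<tau> x \<le> y} \<in> sets M"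
  proof (cases y)
    case (real y')
    show ?thesis
    proof (cases "0 \<le> y'")
      case True
      then have "{x\<in>space M. \<tau> x \<le> ereal y'} \<in> sets (F y')"
        using ST unfolding FT_stopping_time_def by blast
      then show ?thesis using subalg_F[OF True] real unfolding subalgebra_def by auto
    next
      case False
      then have "{x \<in> space M. \<tau> x \<le> y} = {}" using tau_nonneg real
        by (metis (mono_tags, lifting) Collect_empty_eq ereal_less_eq(5) order_trans)
      then show ?thesis by (simp only: sets.empty_sets)
    qed
  next
    case PInf then show ?thesis by simp
  next
    case MInf
    have "\<not> \<tau> x \<le> y" if "x \<in> space M" for x
      using tau_nonneg[OF that] MInf by (cases "\<tau> x") auto
    then have e: "{x \<in> space M. \<tau> x \<le> y} = {}" by blast
    show ?thesis unfolding e by (rule sets.empty_sets)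
  qed
qed

end

context EZ begin

definition eg :: "ereal \<Rightarrow> real" where "eg z = (case z of ereal y \<Rightarrow> exp (- \<gamma> * y) | _ \<Rightarrow> 0)"
definition kap :: real where "kap = 1 / (\<gamma> * \<theta>)"
definition aa :: "nat \<Rightarrow> real \<Rightarrow> 'a \<Rightarrow> real" where
  "aa i s x = kap * (exp (- \<gamma> * s) - eg (tt (Suc i))) * (if tt i < \<tau> x then 1 else 0)"
definition Bd :: "nat \<Rightarrow> real" where "Bd i = (kap * eg (tt (Suc i))) powr \<theta>"
primrec cc :: "nat \<Rightarrow> 'a \<Rightarrow> real" where
  "cc 0 = (\<lambda>x. 0)"
| "cc (Suc m) = (\<lambda>x. min (Bd (n - 2 - m)) (max 0 (real_cond_exp M (F (r (n - 2 - m)))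
       (\<lambda>y. (cc m y powr (1/\<theta>) + aa (n - 1 - m) (r (n - 1 - m)) y) powr \<theta>) x)))"
definition cv :: "nat \<Rightarrow> 'a \<Rightarrow> real" where "cv i = cc (n - 1 - i)"
definition YY :: "nat \<Rightarrow> real \<Rightarrow> 'a \<Rightarrow> real" where "YY i s x = cv i x powr (1/\<theta>) + aa i s x"
definition ff :: "nat \<Rightarrow> real \<Rightarrow> 'a \<Rightarrow> real" where "ff i s x = YY i s x powr \<theta>"
definition WW :: "real \<Rightarrow> 'a \<Rightarrow> real" where
  "WW s x = (\<Sum>i<n. if tt i \<le> ereal s \<and> ereal s < tt (Suc i) then ff i s x else 0)"

lemma kap_pos: "kap > 0" using gam th unfolding kap_def by simp

lemma eg_nn: "0 \<le> eg z" unfolding eg_def by (cases z) auto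

lemma eg_tt: "i < n \<Longrightarrow> eg (tt i) = exp (- \<gamma> * r i)"
  using tt_fin unfolding eg_def by simp

lemma eg_ttn: "eg (tt n) = 0" using ttn unfolding eg_def by simp

lemma eg_le: assumes "i < n" "ereal s \<le> tt (Suc i)" shows "eg (tt (Suc i)) \<le> exp (- \<gamma> * s)"
proof (cases "Suc i < n")
  case True
  then have "s \<le> r (Suc i)" using tt_fin[OF True] assms by simp
  then show ?thesis using eg_tt[OF True] gam by simp
next
  case False
  then have "Suc i = n" using assms by simp
  then show ?thesis using eg_ttn by simp
qed

lemma eg_lt: assumes "i < n" "ereal s < tt (Suc i)" shows "eg (tt (Suc i)) < exp (- \<gamma> * s)"
proof (cases "Suc i < n")
  case True
  then have "s < r (Suc i)" using tt_fin[OF True] assms by simp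
  then show ?thesis using eg_tt[OF True] gam by simp
next
  case False
  then have "Suc i = n" using assms by simp
  then show ?thesis using eg_ttn by simp
qed

lemma cv_last: "cv (n - 1) = (\<lambda>x. 0)"
  unfolding cv_def by simp

lemma cv_rec:
  assumes "Suc i < n"
  shows "cv i = (\<lambda>x. min (Bd i) (max 0 (real_cond_exp M (G i) (ff (Suc i) (r (Suc i))) x)))"
proof -
  define m where "m = n - 2 - i"
  have e: "n - 1 - i = Suc m" "n - 2 - m = i" "n - 1 - m = Suc i" using assms unfolding m_def by auto
  have cm: "cc m = cv (Suc i)" unfolding cv_def m_def by (simp add: numeral_2_eq_2)
  have "cv i = cc (Suc m)" unfolding cv_def e by simp
  also have "\<dots> = (\<lambda>x. min (Bd (n - 2 - m)) (max 0 (real_cond_exp M (F (r (n - 2 - m)))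
       (\<lambda>y. (cc m y powr (1/\<theta>) + aa (n - 1 - m) (r (n - 1 - m)) y) powr \<theta>) x)))"
    by (simp only: cc.simps)
  also have "\<dots> = (\<lambda>x. min (Bd i) (max 0 (real_cond_exp M (G i) (ff (Suc i) (r (Suc i))) x)))"
    unfolding e cm ff_def YY_def by simp
  finally show ?thesis .
qed

lemma Bd_last: "Bd (n - 1) = 0"
  using n_pos eg_ttn th unfolding Bd_def by simp

lemma Bd_nn: "0 \<le> Bd i" unfolding Bd_def by simp

lemma cv_bounds: assumes "i < n" shows "0 \<le> cv i x" "cv i x \<le> Bd i"
proof -
  have "0 \<le> cv i x \<and> cv i x \<le> Bd i"
  proof (cases "Suc i < n")
    case True
    show ?thesis unfolding cv_rec[OF True] using Bd_nn[of i] by simp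
  next
    case False
    then have "i = n - 1" using assms by simp
    then show ?thesis using cv_last Bd_last by simp
  qed
  then show "0 \<le> cv i x" "cv i x \<le> Bd i" by auto
qed

lemma cv_meas: assumes "i < n" shows "cv i \<in> borel_measurable (G i)"
proof (cases "Suc i < n")
  case True
  show ?thesis unfolding cv_rec[OF True] by measurable
next
  case False
  then have "i = n - 1" using assms by simp
  then show ?thesis using cv_last by simp
qed

lemma aa_bounds:
  assumes "i < n" "ereal s \<le> tt (Suc i)"
  shows "0 \<le> aa i s x" "aa i s x \<le> kap * (exp (- \<gamma> * s) - eg (tt (Suc i)))"
  using eg_le[OF assms] kap_pos unfolding aa_def by auto

lemma Bd_root: "Bd i powr (1/\<theta>) = kap * eg (tt (Suc i))"
  using th kap_pos eg_nn unfolding Bd_def by (simp add: powr_powr)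

lemma cv_root_le: assumes "i < n" shows "cv i x powr (1/\<theta>) \<le> kap * eg (tt (Suc i))"
  using powr_mono2[of "1/\<theta>" "cv i x" "Bd i"] cv_bounds[OF assms] th Bd_root by simp

lemma YY_bounds:
  assumes "i < n" "ereal s \<le> tt (Suc i)"
  shows "0 \<le> YY i s x" "YY i s x \<le> kap * exp (- \<gamma> * s)"
proof -
  show "0 \<le> YY i s x" unfolding YY_def using aa_bounds[OF assms, of x] by simp
  have "YY i s x \<le> kap * eg (tt (Suc i)) + kap * (exp (- \<gamma> * s) - eg (tt (Suc i)))"
    unfolding YY_def using aa_bounds[OF assms, of x] cv_root_le[OF assms(1), of x] by simp
  then show "YY i s x \<le> kap * exp (- \<gamma> * s)" by (simp add: algebra_simps)
qed

lemma ff_nn: "0 \<le> ff i s x" unfolding ff_def by simp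

lemma ff_le:
  assumes "i < n" "ereal s \<le> tt (Suc i)"
  shows "ff i s x \<le> (kap * exp (- \<gamma> * s)) powr \<theta>"
  unfolding ff_def using YY_bounds[OF assms, of x] th by (intro powr_mono2) auto

lemma r_in_interval: assumes "i < n" shows "tt i \<le> ereal (r i)" "ereal (r i) < tt (Suc i)"
  using tt_fin[OF assms] ttmono assms by auto

lemma ff_grid_le:
  assumes "Suc i < n" shows "ff (Suc i) (r (Suc i)) y \<le> Bd i"
proof -
  have "ff (Suc i) (r (Suc i)) y \<le> (kap * exp (- \<gamma> * r (Suc i))) powr \<theta>"
    using ff_le[OF assms] r_in_interval[OF assms] by (simp add: less_imp_le)
  also have "\<dots> = Bd i" unfolding Bd_def using eg_tt[OF assms] by simp
  finally show ?thesis .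
qed

lemma WW_eq:
  assumes "i < n" "tt i \<le> ereal s" "ereal s < tt (Suc i)"
  shows "WW s x = ff i s x"
proof -
  have "WW s x = (\<Sum>j<n. if j = i then ff j s x else 0)"
    unfolding WW_def
  proof (rule sum.cong)
    fix j assume "j \<in> {..<n}"
    then have j: "j < n" by simp
    show "(if tt j \<le> ereal s \<and> ereal s < tt (Suc j) then ff j s x else 0) = (if j = i then ff j s x else 0)"
    proof (cases "tt j \<le> ereal s \<and> ereal s < tt (Suc j)")
      case True
      then have "i = j" using interval_unique[OF assms(1) j assms(2,3)] by blast
      then show ?thesis using True by simp
    next
      case False
      then have ji: "j \<noteq> i" using assms by blast
      show ?thesis by (subst if_not_P[OF False], subst if_not_P[OF ji]) (rule refl)
    qed
  qed simp
  then show ?thesis using assms(1) by simp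
qed

lemma WW_nn: "0 \<le> WW s x"
  unfolding WW_def by (intro sum_nonneg) (simp add: ff_nn)

lemma aa_meas_pair:
  assumes "i < n"
  shows "(\<lambda>p. aa i (fst p) (snd p)) \<in> borel_measurable (borel \<Otimes>\<^sub>M G i)"
proof -
  note [measurable] = pred_tau_G[OF assms]
  show ?thesis unfolding aa_def by measurable
qed

lemma ff_meas_pair:
  assumes "i < n"
  shows "(\<lambda>p. ff i (fst p) (snd p)) \<in> borel_measurable (borel \<Otimes>\<^sub>M G i)"
proof -
  note [measurable] = pred_tau_G[OF assms] cv_meas[OF assms]
  show ?thesis unfolding ff_def YY_def aa_def by measurable
qed

end

context EZ begin

definition UU :: "real \<Rightarrow> 'a \<Rightarrow> real" where
  "UU s x = exp (- \<gamma> * s) * (if ereal s < \<tau> x then 1 else 0)"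
definition HH :: "real \<Rightarrow> real \<Rightarrow> 'a \<Rightarrow> real" where
  "HH t s x = indicator {t..} s * h_EZ \<theta> (UU s x) (WW s x)"
definition Zf :: "real \<Rightarrow> 'a \<Rightarrow> ennreal" where
  "Zf t x = (\<integral>\<^sup>+ s. ennreal (HH t s x) \<partial>lborel)"

lemma subalg_G_sets: "i < n \<Longrightarrow> space (G i) = space M \<and> sets (G i) \<subseteq> sets M"
  using subalg_G unfolding subalgebra_def by auto

lemma ff_meas_M: "i < n \<Longrightarrow> (\<lambda>p. ff i (fst p) (snd p)) \<in> borel_measurable (borel \<Otimes>\<^sub>M M)"
  by (rule pair_sub_meas[OF _ _ ff_meas_pair]) (use subalg_G_sets in auto)

lemma ff_meas_fix: "i < n \<Longrightarrow> ff i t \<in> borel_measurable (G i)"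
  using measurable_Pair2[OF ff_meas_pair, of i t] by simp

lemma ff_meas_fixM: "i < n \<Longrightarrow> ff i t \<in> borel_measurable M"
  using measurable_Pair2[OF ff_meas_M, of i t] by simp

lemma cv_meas_M: "i < n \<Longrightarrow> cv i \<in> borel_measurable M"
  using measurable_from_subalg[OF subalg_G cv_meas] by blast

lemma WW_meas_M: "(\<lambda>p. WW (fst p) (snd p)) \<in> borel_measurable (borel \<Otimes>\<^sub>M M)"
  unfolding WW_def
proof (rule borel_measurable_sum)
  fix i assume "i \<in> {..<n}"
  then have [measurable]: "(\<lambda>p. ff i (fst p) (snd p)) \<in> borel_measurable (borel \<Otimes>\<^sub>M M)"
    using ff_meas_M by simp
  show "(\<lambda>p. if tt i \<le> ereal (fst p) \<and> ereal (fst p) < tt (Suc i) then ff i (fst p) (snd p) else 0)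
      \<in> borel_measurable (borel \<Otimes>\<^sub>M M)" by measurable
qed

lemma WW_meas_fixM: "WW t \<in> borel_measurable M"
  using measurable_Pair2[OF WW_meas_M, of t] by simp

lemma HH_meas: "(\<lambda>p. HH t (fst p) (snd p)) \<in> borel_measurable (borel \<Otimes>\<^sub>M M)"
proof -
  note [measurable] = WW_meas_M tau_meas
  show ?thesis unfolding HH_def h_EZ_def UU_def by measurable
qed

lemma HH_meas_swap: "(\<lambda>(x, s). ennreal (HH t s x)) \<in> borel_measurable (M \<Otimes>\<^sub>M lborel)"
proof -
  have "(\<lambda>p. ennreal (HH t (fst p) (snd p))) \<in> borel_measurable (borel \<Otimes>\<^sub>M M)"
    using HH_meas by measurable
  then have "(\<lambda>(x, s). ennreal (HH t s x)) \<in> borel_measurable (M \<Otimes>\<^sub>M borel)"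
    by (subst (asm) measurable_pair_swap_iff) (simp add: case_prod_beta)
  moreover have "sets (M \<Otimes>\<^sub>M lborel) = sets (M \<Otimes>\<^sub>M borel)"
    by (rule sets_pair_measure_cong) simp_all
  ultimately show ?thesis by (simp cong: measurable_cong_sets)
qed

lemma Zf_meas: "Zf t \<in> borel_measurable M"
  unfolding Zf_def using lborel.borel_measurable_nn_integral[OF HH_meas_swap[of t]] by simp

lemma HH_meas_s: "x \<in> space M \<Longrightarrow> (\<lambda>s. HH t s x) \<in> borel_measurable borel"
  using measurable_compose[OF measurable_Pair2'[of x M borel] HH_meas[of t]] by simp

lemma HH_nn: "0 \<le> HH t s x"
  unfolding HH_def h_EZ_def UU_def by (auto simp: indicator_def)

lemma h_on_interval:
  assumes x: "x \<in> space M" and i: "i < n" "tt i \<le> ereal s" "ereal s < tt (Suc i)"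
  shows "h_EZ \<theta> (UU s x) (WW s x) = exp (- \<gamma> * s) * (if tt i < \<tau> x then 1 else 0) * YY i s x powr (\<theta> - 1)"
proof -
  have "UU s x = exp (- \<gamma> * s) * (if tt i < \<tau> x then 1 else 0)"
    unfolding UU_def using K[OF x i] by simp
  moreover have "WW s x powr ((\<theta> - 1) / \<theta>) = YY i s x powr (\<theta> - 1)"
    unfolding WW_eq[OF i] ff_def using th by (simp add: powr_powr)
  ultimately show ?thesis unfolding h_EZ_def by simp
qed

lemma cv_root_pow: "i < n \<Longrightarrow> (cv i x powr (1/\<theta>)) powr \<theta> = cv i x"
  using cv_bounds[of i x] th by (simp add: powr_powr)

lemma ff_ge_cv:
  assumes "i < n" "ereal t \<le> tt (Suc i)" shows "cv i x \<le> ff i t x"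
proof -
  have "cv i x powr (1/\<theta>) \<le> YY i t x" unfolding YY_def using aa_bounds[OF assms, of x] by simp
  then have "(cv i x powr (1/\<theta>)) powr \<theta> \<le> YY i t x powr \<theta>"
    using th by (intro powr_mono2) auto
  then show ?thesis unfolding ff_def cv_root_pow[OF assms(1)] .
qed

lemma first_piece:
  assumes x: "x \<in> space M" and i: "i < n" "tt i \<le> ereal t" "ereal t < tt (Suc i)"
  shows "(\<integral>\<^sup>+ s. ennreal (indicator {s. t \<le> s \<and> ereal s < tt (Suc i)} s * h_EZ \<theta> (UU s x) (WW s x)) \<partial>lborel)
         = ennreal (ff i t x - cv i x)"
proof (cases "tt i < \<tau> x")
  case True
  define C where "C = cv i x powr (1/\<theta>)"
  have C0: "C \<ge> 0" unfolding C_def by simp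
  have "(\<integral>\<^sup>+ s. ennreal (indicator {s. t \<le> s \<and> ereal s < tt (Suc i)} s * h_EZ \<theta> (UU s x) (WW s x)) \<partial>lborel)
      = (\<integral>\<^sup>+ s. ennreal (indicator {s. t \<le> s \<and> ereal s < tt (Suc i)} s *
           (exp (- \<gamma> * s) * (C + kap * (exp (- \<gamma> * s) - eg (tt (Suc i)))) powr (\<theta> - 1))) \<partial>lborel)"
  proof (rule nn_integral_cong)
    fix s :: real
    show "ennreal (indicator {s. t \<le> s \<and> ereal s < tt (Suc i)} s * h_EZ \<theta> (UU s x) (WW s x)) =
          ennreal (indicator {s. t \<le> s \<and> ereal s < tt (Suc i)} s *
           (exp (- \<gamma> * s) * (C + kap * (exp (- \<gamma> * s) - eg (tt (Suc i)))) powr (\<theta> - 1)))"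
    proof (cases "t \<le> s \<and> ereal s < tt (Suc i)")
      case T2: True
      then have "tt i \<le> ereal s" using i(2) by (meson ereal_less_eq(3) order_trans)
      then have "h_EZ \<theta> (UU s x) (WW s x) = exp (- \<gamma> * s) * (C + kap * (exp (- \<gamma> * s) - eg (tt (Suc i)))) powr (\<theta> - 1)"
        using h_on_interval[OF x i(1) _ ] T2 True unfolding YY_def aa_def C_def by simp
      then show ?thesis by simp
    qed simp
  qed
  also have "\<dots> = ennreal ((C + kap * (exp (- \<gamma> * t) - eg (tt (Suc i)))) powr \<theta> - C powr \<theta>)"
    by (rule ftc_piece[OF gam th kap_def C0 i(3)]) (simp add: eg_def)
  also have "(C + kap * (exp (- \<gamma> * t) - eg (tt (Suc i)))) powr \<theta> = ff i t x"
    unfolding ff_def YY_def aa_def C_def using True by simp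
  also have "C powr \<theta> = cv i x" unfolding C_def using cv_root_pow[OF i(1)] .
  finally show ?thesis .
next
  case False
  have z: "ennreal (indicator {s. t \<le> s \<and> ereal s < tt (Suc i)} s * h_EZ \<theta> (UU s x) (WW s x)) = 0" for s
  proof (cases "t \<le> s \<and> ereal s < tt (Suc i)")
    case T2: True
    then have "tt i \<le> ereal s" using i(2) by (meson ereal_less_eq(3) order_trans)
    then show ?thesis using h_on_interval[OF x i(1) _ ] T2 False by simp
  qed simp
  have "(\<integral>\<^sup>+ s. ennreal (indicator {s. t \<le> s \<and> ereal s < tt (Suc i)} s * h_EZ \<theta> (UU s x) (WW s x)) \<partial>lborel) = 0"
    by (simp only: z nn_integral_const mult_zero_left)
  moreover have "ff i t x = cv i x"
    unfolding ff_def YY_def aa_def using False cv_root_pow[OF i(1)] by simp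
  ultimately show ?thesis by simp
qed

lemma Zf_split:
  assumes x: "x \<in> space M" and i: "i < n" "tt i \<le> ereal t" "ereal t < tt (Suc i)"
  shows "Zf t x = ennreal (ff i t x - cv i x) + (if Suc i < n then Zf (r (Suc i)) x else 0)"
proof -
  define I1 where "I1 = {s. t \<le> s \<and> ereal s < tt (Suc i)}"
  define H where "H s = h_EZ \<theta> (UU s x) (WW s x)" for s
  have Hnn: "0 \<le> H s" for s unfolding H_def h_EZ_def UU_def by auto
  have Hm: "H \<in> borel_measurable borel"
  proof -
    have "(\<lambda>s. HH (t - 1) s x) \<in> borel_measurable borel" by (rule HH_meas_s[OF x])
    note [measurable] = measurable_compose[OF measurable_Pair2'[of x M borel] WW_meas_M, simplified]
    show ?thesis unfolding H_def h_EZ_def UU_def using x tau_meas by measurable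
  qed
  show ?thesis
  proof (cases "Suc i < n")
    case True
    have tr: "t < r (Suc i)" using i(3) tt_fin[OF True] by simp
    have "Zf t x = (\<integral>\<^sup>+ s. ennreal (indicator I1 s * H s) + ennreal (HH (r (Suc i)) s x) \<partial>lborel)"
      unfolding Zf_def
    proof (rule nn_integral_cong)
      fix s
      show "ennreal (HH t s x) = ennreal (indicator I1 s * H s) + ennreal (HH (r (Suc i)) s x)"
        unfolding HH_def H_def[symmetric] I1_def using tr Hnn[of s] tt_fin[OF True]
        by (auto simp: indicator_def)
    qed
    also have "\<dots> = (\<integral>\<^sup>+ s. ennreal (indicator I1 s * H s) \<partial>lborel) + Zf (r (Suc i)) x"
      unfolding Zf_def
      by (rule nn_integral_add) (use Hm HH_meas_s[OF x] in \<open>auto simp: I1_def\<close>)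
    also have "(\<integral>\<^sup>+ s. ennreal (indicator I1 s * H s) \<partial>lborel) = ennreal (ff i t x - cv i x)"
      unfolding I1_def H_def by (rule first_piece[OF x i])
    finally show ?thesis using True by simp
  next
    case False
    then have sn: "Suc i = n" using i by simp
    have "Zf t x = (\<integral>\<^sup>+ s. ennreal (indicator I1 s * H s) \<partial>lborel)"
      unfolding Zf_def
    proof (rule nn_integral_cong)
      fix s
      show "ennreal (HH t s x) = ennreal (indicator I1 s * H s)"
        unfolding HH_def H_def[symmetric] I1_def using sn ttn by (auto simp: indicator_def)
    qed
    also have "\<dots> = ennreal (ff i t x - cv i x)"
      unfolding I1_def H_def by (rule first_piece[OF x i])
    finally show ?thesis using False by simp
  qed
qed

end

context EZ begin

lemma sfs: "i < n \<Longrightarrow> sigma_finite_subalgebra M (G i)"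
  using prob subalg_G finite_measure_subalgebra_is_sigma_finite
  unfolding finite_measure_subalgebra_def finite_measure_subalgebra_axioms_def prob_space_def
  by blast

lemma sfsF: "0 \<le> t \<Longrightarrow> sigma_finite_subalgebra M (F t)"
  using prob subalg_F finite_measure_subalgebra_is_sigma_finite
  unfolding finite_measure_subalgebra_def finite_measure_subalgebra_axioms_def prob_space_def
  by blast

lemma fin_M: "finite_measure M" using prob unfolding prob_space_def by simp

lemma integrable_bdd:
  fixes g :: "'a \<Rightarrow> real"
  assumes "g \<in> borel_measurable M" "\<And>x. x \<in> space M \<Longrightarrow> \<bar>g x\<bar> \<le> B"
  shows "integrable M g"
  using finite_measure.integrable_const_bound[OF fin_M, of g B] assms by auto

lemma nn_real_cond:
  assumes sf: "sigma_finite_subalgebra M H" and gm[measurable]: "g \<in> borel_measurable M"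
    and gb: "\<And>x. x \<in> space M \<Longrightarrow> 0 \<le> g x \<and> g x \<le> B"
  shows "AE x in M. nn_cond_exp M H (\<lambda>x. ennreal (g x)) x = ennreal (real_cond_exp M H g x)"
proof -
  interpret H: sigma_finite_subalgebra M H by (rule sf)
  have "AE x in M. nn_cond_exp M H (\<lambda>x. ennreal (- g x)) x = nn_cond_exp M H (\<lambda>x. 0) x"
    by (rule H.nn_cond_exp_cong) (use gb in \<open>auto simp: ennreal_eq_0_iff\<close>)
  moreover have "AE x in M. (\<lambda>x. 0) x = nn_cond_exp M H (\<lambda>x. 0) x"
    by (rule H.nn_cond_exp_F_meas) simp
  moreover have "AE x in M. nn_cond_exp M H (\<lambda>x. ennreal (g x)) x \<le> nn_cond_exp M H (\<lambda>x. ennreal B) x"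
    by (rule H.nn_cond_exp_mono) (use gb in \<open>auto intro: ennreal_leI\<close>)
  moreover have "AE x in M. (\<lambda>x. ennreal B) x = nn_cond_exp M H (\<lambda>x. ennreal B) x"
    by (rule H.nn_cond_exp_F_meas) simp
  ultimately show ?thesis
  proof (eventually_elim)
    case (elim x)
    then have "nn_cond_exp M H (\<lambda>x. ennreal (g x)) x < \<top>"
      by (metis ennreal_less_top order_le_less_trans)
    then show ?case using elim unfolding real_cond_exp_def by simp
  qed
qed

lemma ff_grid_meas: "Suc i < n \<Longrightarrow> ff (Suc i) (r (Suc i)) \<in> borel_measurable M"
  using ff_meas_fixM by simp

lemma ff_grid_int: "Suc i < n \<Longrightarrow> integrable M (ff (Suc i) (r (Suc i)))"
  by (rule integrable_bdd[of _ "Bd i"]) (use ff_grid_meas ff_grid_le ff_nn in auto)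

lemma cv_ae:
  assumes "Suc i < n"
  shows "AE x in M. cv i x = real_cond_exp M (G i) (ff (Suc i) (r (Suc i))) x"
proof -
  interpret Gi: sigma_finite_subalgebra M "G i" using sfs assms by simp
  have "AE x in M. real_cond_exp M (G i) (ff (Suc i) (r (Suc i))) x \<ge> 0"
    by (rule Gi.real_cond_exp_pos) (use ff_grid_meas[OF assms] ff_nn in auto)
  moreover have "AE x in M. real_cond_exp M (G i) (ff (Suc i) (r (Suc i))) x \<le> Bd i"
    by (rule Gi.real_cond_exp_le_c) (use ff_grid_int[OF assms] ff_grid_le[OF assms] in auto)
  ultimately show ?thesis unfolding cv_rec[OF assms] by eventually_elim simp
qed

lemma subalg_GG: "i \<le> j \<Longrightarrow> j < n \<Longrightarrow> subalgebra (G j) (G i)"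
  using space_F[of "r i"] space_F[of "r j"] r_nonneg[of i] r_nonneg[of j] F_mono[of "r i" "r j"] r_mono[of i j]
  unfolding subalgebra_def by auto

lemma nn_cond_F_G:
  assumes "i < n" "tt i \<le> ereal t" "ereal t < tt (Suc i)"
  shows "nn_cond_exp M (F t) = nn_cond_exp M (G i)"
  by (rule nn_cond_exp_sets_eq[OF subalg_F[OF t_nonneg_interval[OF assms(1,2)]] subalg_G[OF assms(1)] sets_F_interval[OF assms]])

lemma main_eq:
  "i < n \<Longrightarrow> tt i \<le> ereal t \<Longrightarrow> ereal t < tt (Suc i) \<Longrightarrow>
    AE x in M. ennreal (WW t x) = nn_cond_exp M (F t) (Zf t) x"
proof (induction "n - i" arbitrary: i t rule: less_induct)
  case less
  note i = less.prems
  interpret Gi: sigma_finite_subalgebra M "G i" using sfs i by simp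
  have WWe: "WW t x = ff i t x" for x using WW_eq[OF i] .
  have eqF: "nn_cond_exp M (F t) = nn_cond_exp M (G i)" by (rule nn_cond_F_G[OF i])
  have ffm[measurable]: "ff i t \<in> borel_measurable (G i)" using ff_meas_fix i by simp
  have ffmM[measurable]: "ff i t \<in> borel_measurable M" using ff_meas_fixM i by simp
  note Zm[measurable] = Zf_meas
  show ?case
  proof (cases "Suc i < n")
    case False
    then have "i = n - 1" using i by simp
    then have cv0: "cv i x = 0" for x using cv_last by simp
    have Zs: "\<forall>x\<in>space M. Zf t x = ennreal (ff i t x)"
      using Zf_split[OF _ i] False cv0 by simp
    have "AE x in M. nn_cond_exp M (G i) (Zf t) x = nn_cond_exp M (G i) (\<lambda>x. ennreal (ff i t x)) x"
      by (rule Gi.nn_cond_exp_cong) (use Zs in auto)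
    moreover have "AE x in M. ennreal (ff i t x) = nn_cond_exp M (G i) (\<lambda>x. ennreal (ff i t x)) x"
      using Gi.nn_cond_exp_F_meas[of "\<lambda>x. ennreal (ff i t x)"] by simp
    ultimately show ?thesis unfolding eqF WWe by auto
  next
    case True
    define A where "A x = ennreal (ff i t x - cv i x)" for x
    define Z1 where "Z1 = Zf (r (Suc i))"
    have Zs: "\<forall>x\<in>space M. Zf t x = A x + Z1 x"
      using Zf_split[OF _ i] True unfolding A_def Z1_def by simp
    have cvm[measurable]: "cv i \<in> borel_measurable (G i)" using cv_meas i by simp
    have Am[measurable]: "A \<in> borel_measurable (G i)" unfolding A_def by measurable
    have AmM[measurable]: "A \<in> borel_measurable M" using measurable_from_subalg[OF subalg_G[OF i(1)] Am] .
    have Z1m[measurable]: "Z1 \<in> borel_measurable M" unfolding Z1_def by measurable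
    have e1: "AE x in M. nn_cond_exp M (G i) (Zf t) x = nn_cond_exp M (G i) (\<lambda>x. A x + Z1 x) x"
      by (rule Gi.nn_cond_exp_cong) (use Zs in auto)
    have e2: "AE x in M. nn_cond_exp M (G i) A x + nn_cond_exp M (G i) Z1 x = nn_cond_exp M (G i) (\<lambda>x. A x + Z1 x) x"
      by (rule Gi.nn_cond_exp_sum) auto
    have e3: "AE x in M. A x = nn_cond_exp M (G i) A x"
      by (rule Gi.nn_cond_exp_F_meas) simp
    have Si: "tt (Suc i) \<le> ereal (r (Suc i))" "ereal (r (Suc i)) < tt (Suc (Suc i))"
      using r_in_interval[OF True] by auto
    have IH: "AE x in M. ennreal (WW (r (Suc i)) x) = nn_cond_exp M (F (r (Suc i))) Z1 x"
      unfolding Z1_def by (rule less.hyps[OF _ True Si]) (use i in simp)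
    have e4: "AE x in M. nn_cond_exp M (G i) Z1 x = nn_cond_exp M (G i) (nn_cond_exp M (G (Suc i)) Z1) x"
      by (rule Gi.nn_cond_exp_nested_subalg[OF subalg_G[OF True] subalg_GG[OF _ True]]) auto
    have e5: "AE x in M. nn_cond_exp M (G i) (nn_cond_exp M (G (Suc i)) Z1) x
        = nn_cond_exp M (G i) (\<lambda>x. ennreal (ff (Suc i) (r (Suc i)) x)) x"
    proof (rule Gi.nn_cond_exp_cong)
      show "AE x in M. nn_cond_exp M (G (Suc i)) Z1 x = ennreal (ff (Suc i) (r (Suc i)) x)"
        using IH WW_eq[OF True Si] by auto
      show "(\<lambda>x. ennreal (ff (Suc i) (r (Suc i)) x)) \<in> borel_measurable M"
        using ff_grid_meas[OF True] by measurable
    qed simp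
    have e6: "AE x in M. nn_cond_exp M (G i) (\<lambda>x. ennreal (ff (Suc i) (r (Suc i)) x)) x
        = ennreal (real_cond_exp M (G i) (ff (Suc i) (r (Suc i))) x)"
      by (rule nn_real_cond[OF sfs[OF i(1)] ff_grid_meas[OF True], of "Bd i"])
         (use ff_nn ff_grid_le[OF True] in auto)
    have e7: "AE x in M. cv i x = real_cond_exp M (G i) (ff (Suc i) (r (Suc i))) x"
      by (rule cv_ae[OF True])
    have fin: "A x + ennreal (cv i x) = ennreal (ff i t x)" for x
    proof -
      have "cv i x \<le> ff i t x" using ff_ge_cv[OF i(1)] i(3) by (simp add: less_imp_le)
      then show ?thesis unfolding A_def using cv_bounds[OF i(1), of x] by (simp add: ennreal_plus[symmetric])
    qed
    from e1 e2 e3 e4 e5 e6 e7 show ?thesis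
      unfolding eqF WWe
    proof (eventually_elim)
      case (elim x)
      then show ?case using fin[of x] by simp
    qed
  qed
qed

end

context EZ begin

lemma ff_tendsto:
  assumes "i < n" and ev: "\<forall>\<^sub>F s in at t within S. ereal s \<le> tt (Suc i)"
  shows "((\<lambda>s. ff i s x) \<longlongrightarrow> ff i t x) (at t within S)"
proof -
  have b: "((\<lambda>s. YY i s x) \<longlongrightarrow> YY i t x) (at t within S)"
    unfolding YY_def aa_def by (intro tendsto_intros)
  have "\<forall>\<^sub>F s in at t within S. 0 \<le> YY i s x"
    using ev by eventually_elim (use YY_bounds[OF assms(1)] in auto)
  then show ?thesis unfolding ff_def using th by (intro tendsto_powr2[OF b tendsto_const]) auto
qed

lemma ev_right:
  assumes "ereal t < T" shows "\<forall>\<^sub>F s in at_right t. t < s \<and> ereal s < T"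
proof (cases T)
  case (real b)
  then show ?thesis using eventually_at_right_real[of t b] assms by (auto elim: eventually_mono)
next
  case PInf then show ?thesis using eventually_at_right_less[of t] by simp
next
  case MInf then show ?thesis using assms by simp
qed

lemma cadlag: "cadlag_on M WW"
  unfolding cadlag_on_def
proof (intro ballI allI impI conjI)
  fix x t :: real
  fix x assume "x \<in> space M"
  fix t :: real assume t0: "0 \<le> t"
  obtain i where i: "i < n" "tt i \<le> ereal t" "ereal t < tt (Suc i)" using interval_ex[OF t0] by blast
  have ev: "\<forall>\<^sub>F s in at_right t. t < s \<and> ereal s < tt (Suc i)" by (rule ev_right[OF i(3)])
  have "((\<lambda>s. ff i s x) \<longlongrightarrow> ff i t x) (at_right t)"
    by (rule ff_tendsto[OF i(1)]) (use ev in \<open>auto elim: eventually_mono\<close>)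
  moreover have "\<forall>\<^sub>F s in at_right t. ff i s x = WW s x"
    using ev
  proof eventually_elim
    case (elim s)
    then have "tt i \<le> ereal s" using i(2) by (meson ereal_less_eq(3) less_imp_le order_trans)
    then show ?case using WW_eq[OF i(1) _ ] elim by simp
  qed
  ultimately have "((\<lambda>s. WW s x) \<longlongrightarrow> ff i t x) (at_right t)" by (rule tendsto_cong[THEN iffD1, rotated])
  then show "continuous (at_right t) (\<lambda>s. WW s x)"
    unfolding continuous_within using WW_eq[OF i] by simp
next
  fix x assume "x \<in> space M"
  fix t :: real assume t0: "0 \<le> t" and tp: "0 < t"
  obtain i where i: "i < n" "tt i \<le> ereal t" "ereal t < tt (Suc i)" using interval_ex[OF t0] by blast
  obtain j where j: "j < n" "tt j < ereal t" "ereal t \<le> tt (Suc j)"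
  proof (cases "tt i < ereal t")
    case True then show ?thesis using that i by (auto intro: less_imp_le)
  next
    case False
    then have ti: "tt i = ereal t" using i by simp
    have "i \<noteq> 0"
    proof
      assume "i = 0"
      then have "ereal t = 0" using ti tt0 by simp
      then show False using tp by simp
    qed
    then obtain k where k: "i = Suc k" by (cases i) auto
    have "tt k < tt i" using tt_strict[of k i] k i by simp
    then show ?thesis using that[of k] k i ti by auto
  qed
  obtain a where a: "tt j = ereal a" using tt_fin[OF j(1)] by blast
  have ev: "\<forall>\<^sub>F s in at_left t. a < s \<and> s < t" using eventually_at_left_real[of a t] j a by (auto elim: eventually_mono)
  have "((\<lambda>s. ff j s x) \<longlongrightarrow> ff j t x) (at_left t)"
  proof (rule ff_tendsto[OF j(1)])
    show "\<forall>\<^sub>F s in at_left t. ereal s \<le> tt (Suc j)"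
      using ev by eventually_elim (use j in \<open>auto intro: order_trans[of _ "ereal t"]\<close>)
  qed
  moreover have "\<forall>\<^sub>F s in at_left t. ff j s x = WW s x"
    using ev
  proof eventually_elim
    case (elim s)
    then have "tt j \<le> ereal s" "ereal s < tt (Suc j)" using a j(3) by (auto intro: less_le_trans[of _ "ereal t"])
    then show ?case using WW_eq[OF j(1)] by simp
  qed
  ultimately have "((\<lambda>s. WW s x) \<longlongrightarrow> ff j t x) (at_left t)" by (rule tendsto_cong[THEN iffD1, rotated])
  then show "\<exists>l. ((\<lambda>s. WW s x) \<longlongrightarrow> l) (at_left t)" by blast
qed

lemma prog: "prog_measurable M F WW"
  unfolding prog_measurable_def
proof (intro allI impI)
  fix t :: real assume t0: "0 \<le> t"
  define I where "I = {i. i < n \<and> tt i \<le> ereal t}"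
  define g where "g p = (\<Sum>i\<in>I. if tt i \<le> ereal (fst p) \<and> ereal (fst p) < tt (Suc i) then ff i (fst p) (snd p) else 0)" for p
  have gm: "g \<in> borel_measurable (borel \<Otimes>\<^sub>M F t)"
    unfolding g_def
  proof (rule borel_measurable_sum)
    fix i assume "i \<in> I"
    then have i: "i < n" "tt i \<le> ereal t" unfolding I_def by auto
    have "r i \<le> t" using tt_fin[OF i(1)] i(2) by simp
    then have "sets (G i) \<subseteq> sets (F t)" using F_mono r_nonneg[OF i(1)] by simp
    then have [measurable]: "(\<lambda>p. ff i (fst p) (snd p)) \<in> borel_measurable (borel \<Otimes>\<^sub>M F t)"
      using pair_sub_meas[OF _ _ ff_meas_pair[OF i(1)]] space_F[OF t0] space_F[OF r_nonneg[OF i(1)]] by simp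
    show "(\<lambda>p. if tt i \<le> ereal (fst p) \<and> ereal (fst p) < tt (Suc i) then ff i (fst p) (snd p) else 0)
        \<in> borel_measurable (borel \<Otimes>\<^sub>M F t)" by measurable
  qed
  have f1: "(\<lambda>x. x) \<in> measurable (restrict_space borel {0..t}) borel"
    by (rule measurable_restrict_space1) simp
  have f2: "fst \<in> measurable (restrict_space borel {0..t} \<Otimes>\<^sub>M F t) borel"
    using measurable_compose[OF measurable_fst[of _ "F t"] f1] by simp
  have idm: "(\<lambda>p. p) \<in> measurable (restrict_space borel {0..t} \<Otimes>\<^sub>M F t) (borel \<Otimes>\<^sub>M F t)"
    unfolding measurable_pair_iff using f2 measurable_snd by (auto simp: o_def)
  have gm2: "g \<in> borel_measurable (restrict_space borel {0..t} \<Otimes>\<^sub>M F t)"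
    using measurable_compose[OF idm gm] by simp
  show "(\<lambda>(s, x). WW s x) \<in> borel_measurable (restrict_space borel {0..t} \<Otimes>\<^sub>M F t)"
  proof (rule measurable_cong[THEN iffD1, OF _ gm2])
    fix p assume "p \<in> space (restrict_space borel {0..t} \<Otimes>\<^sub>M F t)"
    then have s: "fst p \<le> t" by (auto simp: space_pair_measure space_restrict_space)
    have "WW (fst p) (snd p) = (\<Sum>i<n. if i \<in> I then (if tt i \<le> ereal (fst p) \<and> ereal (fst p) < tt (Suc i) then ff i (fst p) (snd p) else 0) else 0)"
      unfolding WW_def I_def
      by (rule sum.cong) (use s in \<open>auto intro: order_trans[of _ "ereal (fst p)"]\<close>)
    also have "\<dots> = g p" unfolding g_def by (subst sum.inter_filter[symmetric]) (auto simp: I_def)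
    finally show "g p = (\<lambda>(s, x). WW s x) p" by (simp add: case_prod_beta)
  qed
qed

end

lemma t_powr_le: fixes t \<theta> :: real assumes "0 \<le> t" "t \<le> 1" "1 \<le> \<theta>" shows "t powr \<theta> \<le> t"
proof (cases "t = 0")
  case True then show ?thesis by simp
next
  case False
  then have tp: "0 < t" using assms by simp
  have e: "t * t powr (\<theta> - 1) = t powr (1 + (\<theta> - 1))" by (rule powr_mult_base) (use tp in simp)
  have "t powr (\<theta> - 1) \<le> 1" using assms by (intro powr_le1) auto
  then have "t * t powr (\<theta> - 1) \<le> t * 1" using tp by (intro mult_left_mono) auto
  then show ?thesis using e by simp
qed

lemma powr_conv_nn:
  fixes \<theta> a b t :: real
  assumes "1 \<le> \<theta>" "0 \<le> a" "0 \<le> b" "0 \<le> t" "t \<le> 1"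
  shows "((1 - t) * a + t * b) powr \<theta> \<le> (1 - t) * a powr \<theta> + t * b powr \<theta>"
proof -
  consider "0 < a" "0 < b" | "a = 0" | "b = 0" using assms by linarith
  then show ?thesis
  proof cases
    case 1
    then show ?thesis using convex_onD[OF powr_convex[OF assms(1)], of t a b] assms by simp
  next
    case 2
    have "(t * b) powr \<theta> = t powr \<theta> * b powr \<theta>" using assms by (simp add: powr_mult)
    also have "\<dots> \<le> t * b powr \<theta>" using t_powr_le[of t \<theta>] assms by (intro mult_right_mono) auto
    finally show ?thesis using 2 by simp
  next
    case 3
    have "((1 - t) * a) powr \<theta> = (1 - t) powr \<theta> * a powr \<theta>" using assms by (simp add: powr_mult)
    also have "\<dots> \<le> (1 - t) * a powr \<theta>" using t_powr_le[of "1 - t" \<theta>] assms by (intro mult_right_mono) auto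
    finally show ?thesis using 3 by simp
  qed
qed

lemma q_convex:
  fixes \<theta> :: real assumes "1 \<le> \<theta>" shows "convex_on UNIV (\<lambda>z. (max z 0) powr \<theta>)"
proof (rule convex_onI)
  fix t x y :: real assume t: "0 < t" "t < 1"
  have "max ((1 - t) *\<^sub>R x + t *\<^sub>R y) 0 \<le> (1 - t) * max x 0 + t * max y 0"
  proof -
    have r1: "(1 - t) * x \<le> (1 - t) * max x 0" using t by (intro mult_left_mono) auto
    have r2: "t * y \<le> t * max y 0" using t by (intro mult_left_mono) auto
    have r3: "0 \<le> (1 - t) * max x 0 + t * max y 0" using t by (intro add_nonneg_nonneg mult_nonneg_nonneg) auto
    have "(1 - t) *\<^sub>R x + t *\<^sub>R y \<le> (1 - t) * max x 0 + t * max y 0" using r1 r2 by simp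
    then show ?thesis using r3 by (simp only: max.bounded_iff)
  qed
  then have "(max ((1 - t) *\<^sub>R x + t *\<^sub>R y) 0) powr \<theta> \<le> ((1 - t) * max x 0 + t * max y 0) powr \<theta>"
    using assms by (intro powr_mono2) auto
  also have "\<dots> \<le> (1 - t) * (max x 0) powr \<theta> + t * (max y 0) powr \<theta>"
    using assms t by (intro powr_conv_nn) auto
  finally show "(max ((1 - t) *\<^sub>R x + t *\<^sub>R y) 0) powr \<theta> \<le> (1 - t) * (max x 0) powr \<theta> + t * (max y 0) powr \<theta>" .
qed simp

context EZ begin

definition VV :: "real \<Rightarrow> 'a \<Rightarrow> real" where
  "VV t y = exp (- \<gamma> * t) - (if \<tau> y = \<infinity> then 0 else exp (- \<gamma> * max t (real_of_ereal (\<tau> y))))"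

lemma VV_meas: "VV t \<in> borel_measurable M"
proof -
  note [measurable] = tau_meas
  show ?thesis unfolding VV_def by measurable
qed

lemma VV_bounds: assumes "y \<in> space M" "0 \<le> t" shows "0 \<le> VV t y" "VV t y \<le> 1"
proof -
  have "0 \<le> VV t y \<and> VV t y \<le> 1"
  proof (cases "\<tau> y = \<infinity>")
    case True then show ?thesis unfolding VV_def using gam assms by simp
  next
    case False
    have a: "exp (- \<gamma> * max t (real_of_ereal (\<tau> y))) \<le> exp (- \<gamma> * t)" using gam by simp
    have b: "exp (- \<gamma> * t) \<le> 1" using gam assms by simp
    have c: "0 < exp (- \<gamma> * max t (real_of_ereal (\<tau> y)))" by simp
    have "VV t y = exp (- \<gamma> * t) - exp (- \<gamma> * max t (real_of_ereal (\<tau> y)))"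
      unfolding VV_def using False by simp
    then show ?thesis using a b c by linarith
  qed
  then show "0 \<le> VV t y" "VV t y \<le> 1" by auto
qed

lemma VV_int: "0 \<le> t \<Longrightarrow> integrable M (VV t)"
  by (rule integrable_bdd[OF VV_meas, of _ 1]) (use VV_bounds in fastforce)

lemma VV_split:
  assumes y: "y \<in> space M" and i: "i < n" "tt i \<le> ereal t" "ereal t < tt (Suc i)"
  shows "kap * VV t y = aa i t y + (if Suc i < n then kap * VV (r (Suc i)) y else 0)"
proof -
  obtain j where j: "j \<le> n" "\<tau> y = tt j" using tau_vals[OF y] by blast
  have rt: "r i \<le> t" using tt_fin[OF i(1)] i(2) by simp
  show ?thesis
  proof (cases "j \<le> i")
    case True
    then have jn: "j < n" using i by simp
    have "\<tau> y \<le> tt i" using tt_mono[of j i] True i j by simp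
    then have "\<not> tt i < \<tau> y" by simp
    then have a0: "aa i t y = 0" unfolding aa_def by simp
    have rj: "r j \<le> t" using r_mono[of j i] True i rt by simp
    have tj: "\<tau> y = ereal (r j)" using j tt_fin[OF jn] by simp
    have v0: "VV t y = 0" unfolding VV_def tj using rj by (simp add: max_def)
    have v1: "Suc i < n \<Longrightarrow> VV (r (Suc i)) y = 0"
      unfolding VV_def tj using r_mono[of j "Suc i"] True by (simp add: max_def)
    show ?thesis using a0 v0 v1 by simp
  next
    case False
    then have lt: "tt i < \<tau> y" using tt_strict[of i j] j by simp
    have aa1: "aa i t y = kap * (exp (- \<gamma> * t) - eg (tt (Suc i)))" unfolding aa_def using lt by simp
    show ?thesis
    proof (cases "j = n")
      case True
      then have inf: "\<tau> y = \<infinity>" using j ttn by simp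
      show ?thesis
      proof (cases "Suc i < n")
        case True
        then show ?thesis using aa1 inf eg_tt[OF True] unfolding VV_def by (simp add: algebra_simps)
      next
        case False
        then have "Suc i = n" using i by simp
        then show ?thesis using aa1 inf eg_ttn unfolding VV_def by (simp add: algebra_simps)
      qed
    next
      case jn: False
      then have jn: "j < n" using j by simp
      have si: "Suc i < n" "Suc i \<le> j" using False jn by auto
      have tj: "\<tau> y = ereal (r j)" using j tt_fin[OF jn] by simp
      have "r (Suc i) \<le> r j" using r_mono[OF si(2) jn] .
      moreover have "t < r (Suc i)" using i(3) tt_fin[OF si(1)] by simp
      ultimately show ?thesis using aa1 eg_tt[OF si(1)] si unfolding VV_def tj
        by (simp add: max_def algebra_simps)
    qed
  qed
qed

lemma YY_meas_M: "i < n \<Longrightarrow> YY i s \<in> borel_measurable M"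
proof -
  assume i: "i < n"
  note [measurable] = tau_meas cv_meas_M[OF i]
  show ?thesis unfolding YY_def aa_def by measurable
qed

lemma aa_meas_G: "i < n \<Longrightarrow> aa i s \<in> borel_measurable (G i)"
  using measurable_Pair2[OF aa_meas_pair, of i s] by simp

lemma aa_int: "i < n \<Longrightarrow> ereal s \<le> tt (Suc i) \<Longrightarrow> integrable M (aa i s)"
proof -
  assume i: "i < n" "ereal s \<le> tt (Suc i)"
  have m: "aa i s \<in> borel_measurable M" using measurable_from_subalg[OF subalg_G[OF i(1)] aa_meas_G[OF i(1)]] .
  show ?thesis
    by (rule integrable_bdd[OF m, of "kap * (exp (- \<gamma> * s) - eg (tt (Suc i)))"])
       (use aa_bounds[OF i] in auto)
qed

lemma lower_G:
  "i < n \<Longrightarrow> tt i \<le> ereal t \<Longrightarrow> ereal t < tt (Suc i) \<Longrightarrow>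
    AE x in M. kap * real_cond_exp M (G i) (VV t) x \<le> YY i t x"
proof (induction "n - i" arbitrary: i t rule: less_induct)
  case less
  note i = less.prems
  interpret Gi: sigma_finite_subalgebra M "G i" using sfs i by simp
  have t0: "0 \<le> t" using t_nonneg_interval i by blast
  have aam[measurable]: "aa i t \<in> borel_measurable (G i)" using aa_meas_G i by simp
  have aai: "integrable M (aa i t)" using aa_int i by (simp add: less_imp_le)
  have c0: "0 \<le> cv i x powr (1/\<theta>)" for x by simp
  have e1: "AE x in M. real_cond_exp M (G i) (\<lambda>x. kap * VV t x) x = kap * real_cond_exp M (G i) (VV t) x"
    by (rule Gi.real_cond_exp_cmult[OF VV_int[OF t0]])
  have e2: "AE x in M. aa i t x = real_cond_exp M (G i) (aa i t) x"
    using Gi.real_cond_exp_F_meas[OF aai aam] by auto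
  show ?case
  proof (cases "Suc i < n")
    case False
    have sp: "\<forall>y\<in>space M. kap * VV t y = aa i t y" using VV_split[OF _ i] False by simp
    have "AE x in M. real_cond_exp M (G i) (\<lambda>x. kap * VV t x) x = real_cond_exp M (G i) (aa i t) x"
      by (rule Gi.real_cond_exp_cong) (use sp VV_meas aai in auto)
    with e1 e2 show ?thesis
    proof eventually_elim
      case (elim x) then show ?case using c0[of x] unfolding YY_def by simp
    qed
  next
    case True
    define R where "R = r (Suc i)"
    have Si: "tt (Suc i) \<le> ereal R" "ereal R < tt (Suc (Suc i))"
      using r_in_interval[OF True] unfolding R_def by auto
    have R0: "0 \<le> R" unfolding R_def using r_nonneg[OF True] .
    have sp: "\<forall>y\<in>space M. kap * VV t y = aa i t y + kap * VV R y" using VV_split[OF _ i] True R_def by simp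
    have kVi: "integrable M (\<lambda>y. kap * VV R y)" using VV_int[OF R0] by simp
    have e3: "AE x in M. real_cond_exp M (G i) (\<lambda>x. kap * VV t x) x
        = real_cond_exp M (G i) (\<lambda>y. aa i t y + kap * VV R y) x"
      by (rule Gi.real_cond_exp_cong) (use sp VV_meas aai kVi in auto)
    have e4: "AE x in M. real_cond_exp M (G i) (\<lambda>y. aa i t y + kap * VV R y) x
        = real_cond_exp M (G i) (aa i t) x + real_cond_exp M (G i) (\<lambda>y. kap * VV R y) x"
      by (rule Gi.real_cond_exp_add[OF aai kVi])
    have e5: "AE x in M. real_cond_exp M (G i) (\<lambda>y. kap * VV R y) x = kap * real_cond_exp M (G i) (VV R) x"
      by (rule Gi.real_cond_exp_cmult[OF VV_int[OF R0]])
    have e6: "AE x in M. real_cond_exp M (G i) (real_cond_exp M (G (Suc i)) (VV R)) x = real_cond_exp M (G i) (VV R) x"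
      by (rule Gi.real_cond_exp_nested_subalg[OF subalg_G[OF True] subalg_GG[OF _ True] VV_int[OF R0]]) simp
    have IH: "AE x in M. kap * real_cond_exp M (G (Suc i)) (VV R) x \<le> YY (Suc i) R x"
      unfolding R_def by (rule less.hyps[OF _ True Si[unfolded R_def]]) (use i in simp)
    define X where "X = YY (Suc i) R"
    have Xm: "X \<in> borel_measurable M" unfolding X_def using YY_meas_M[OF True] .
    have Xb: "0 \<le> X x \<and> X x \<le> kap" for x
    proof -
      have "X x \<le> kap * exp (- \<gamma> * R)" using YY_bounds[OF True, of R x] Si unfolding X_def by simp
      also have "\<dots> \<le> kap * 1" using kap_pos gam R0 by (intro mult_left_mono) auto
      finally show ?thesis using YY_bounds[OF True, of R x] Si unfolding X_def by simp
    qed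
    have Xi: "integrable M X" by (rule integrable_bdd[OF Xm, of kap]) (use Xb in auto)
    have Gi_int: "integrable M (real_cond_exp M (G (Suc i)) (VV R))"
      using sigma_finite_subalgebra.real_cond_exp_int(1)[OF sfs[OF True] VV_int[OF R0]] .
    have e7: "AE x in M. real_cond_exp M (G i) (\<lambda>x. kap * real_cond_exp M (G (Suc i)) (VV R) x) x
         = kap * real_cond_exp M (G i) (real_cond_exp M (G (Suc i)) (VV R)) x"
      by (rule Gi.real_cond_exp_cmult[OF Gi_int])
    have e8: "AE x in M. real_cond_exp M (G i) (\<lambda>x. kap * real_cond_exp M (G (Suc i)) (VV R) x) x
         \<le> real_cond_exp M (G i) X x"
      by (rule Gi.real_cond_exp_mono) (use IH Xi Gi_int in \<open>auto simp: X_def\<close>)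
    define q where "q z = (max z 0) powr \<theta>" for z :: real
    have mx: "max (X x) 0 = X x" for x by (rule max_absorb1) (use Xb[of x] in simp)
    have qX: "(\<lambda>x. q (X x)) = ff (Suc i) R"
      by (rule ext) (simp only: q_def mx, simp add: X_def ff_def)
    have qi: "integrable M (\<lambda>x. q (X x))" unfolding qX R_def by (rule ff_grid_int[OF True])
    have qc: "convex_on UNIV q" unfolding q_def using q_convex th by simp
    have qm: "q \<in> borel_measurable borel" unfolding q_def by measurable
    have jen: "AE x in M. q (real_cond_exp M (G i) X x) \<le> real_cond_exp M (G i) (\<lambda>x. q (X x)) x"
      by (rule Gi.real_cond_exp_jensens_inequality(2)[OF Xi _ _ qi qc qm]) auto
    have e9: "AE x in M. cv i x = real_cond_exp M (G i) (ff (Suc i) R) x"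
      unfolding R_def by (rule cv_ae[OF True])
    have e10: "AE x in M. 0 \<le> real_cond_exp M (G i) X x"
      by (rule Gi.real_cond_exp_pos) (use Xb Xm in auto)
    from e1 e2 e3 e4 e5 e6 e7 e8 jen e9 e10 show ?thesis
    proof eventually_elim
      case (elim x)
      let ?m = "real_cond_exp M (G i) X x"
      have "q ?m \<le> real_cond_exp M (G i) (ff (Suc i) R) x" using elim(9) by (simp only: qX)
      then have "?m powr \<theta> \<le> cv i x" using elim(10,11) unfolding q_def by simp
      then have m1: "(?m powr \<theta>) powr (1/\<theta>) \<le> cv i x powr (1/\<theta>)"
        using th by (intro powr_mono2) auto
      have m2: "(?m powr \<theta>) powr (1/\<theta>) = ?m"
        using elim(11) th by (simp add: powr_powr)
      have m: "?m \<le> cv i x powr (1/\<theta>)" using m1 m2 by simp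
      have s1: "kap * real_cond_exp M (G i) (VV t) x = aa i t x + kap * real_cond_exp M (G i) (VV R) x"
        using elim(1) elim(2) elim(3) elim(4) elim(5) by linarith
      have s2a: "kap * real_cond_exp M (G i) (real_cond_exp M (G (Suc i)) (VV R)) x = kap * real_cond_exp M (G i) (VV R) x"
        using elim(6) by (rule arg_cong)
      have s2: "kap * real_cond_exp M (G i) (VV R) x \<le> ?m" using s2a elim(7) elim(8) by linarith
      have "YY i t x = cv i x powr (1/\<theta>) + aa i t x" unfolding YY_def ..
      then show ?case using s1 s2 m by linarith
    qed
  qed
qed

end

context EZ begin

lemma UUp_meas_swap:
  "(\<lambda>(y, s). ennreal (indicator {t..} s * UU s y powr \<theta>)) \<in> borel_measurable (M \<Otimes>\<^sub>M lborel)"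
proof -
  note [measurable] = tau_meas
  have "(\<lambda>p. ennreal (indicator {t..} (fst p) * UU (fst p) (snd p) powr \<theta>)) \<in> borel_measurable (borel \<Otimes>\<^sub>M M)"
    unfolding UU_def by measurable
  then have "(\<lambda>(y, s). ennreal (indicator {t..} s * UU s y powr \<theta>)) \<in> borel_measurable (M \<Otimes>\<^sub>M borel)"
    by (subst (asm) measurable_pair_swap_iff) (simp add: case_prod_beta)
  moreover have "sets (M \<Otimes>\<^sub>M lborel) = sets (M \<Otimes>\<^sub>M borel)"
    by (rule sets_pair_measure_cong) simp_all
  ultimately show ?thesis by (simp cong: measurable_cong_sets)
qed

lemma proper_t:
  assumes t0: "0 \<le> t"
  shows "AE x in M. 0 < nn_cond_exp M (F t) (\<lambda>y. \<integral>\<^sup>+ s. ennreal (indicator {t..} s * UU s y powr \<theta>) \<partial>lborel) x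
          \<longrightarrow> 0 < WW t x"
proof -
  obtain i where i: "i < n" "tt i \<le> ereal t" "ereal t < tt (Suc i)" using interval_ex[OF t0] by blast
  define Q where "Q y = (\<integral>\<^sup>+ s. ennreal (indicator {t..} s * UU s y powr \<theta>) \<partial>lborel)" for y
  define S where "S = {x \<in> space M. tt i < \<tau> x}"
  have Sm: "S \<in> sets (G i)" using pred_tau_G[OF i(1)] space_F[OF r_nonneg[OF i(1)]] unfolding S_def pred_def by simp
  have Qm[measurable]: "Q \<in> borel_measurable M"
    unfolding Q_def using lborel.borel_measurable_nn_integral[OF UUp_meas_swap[of t]] by simp
  have Q0: "Q y = 0" if y: "y \<in> space M" "y \<notin> S" for y
  proof -
    have "ennreal (indicator {t..} s * UU s y powr \<theta>) = 0" for s
    proof (cases "t \<le> s")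
      case True
      have "\<tau> y \<le> tt i" using y unfolding S_def by auto
      also have "tt i \<le> ereal s" using i(2) True by (meson ereal_less_eq(3) order_trans)
      finally have "\<not> ereal s < \<tau> y" by simp
      then show ?thesis unfolding UU_def by simp
    qed simp
    then show ?thesis unfolding Q_def by (simp only: nn_integral_const mult_zero_left)
  qed
  have QQ: "\<forall>y\<in>space M. Q y = indicator S y * Q y"
    using Q0 by (auto simp: indicator_def)
  interpret Gi: sigma_finite_subalgebra M "G i" using sfs i by simp
  have indm[measurable]: "(\<lambda>y. indicator S y :: ennreal) \<in> borel_measurable (G i)" using Sm by simp
  have indmM[measurable]: "(\<lambda>y. indicator S y :: ennreal) \<in> borel_measurable M"
    using measurable_from_subalg[OF subalg_G[OF i(1)] indm] .
  have e1: "AE x in M. nn_cond_exp M (G i) Q x = nn_cond_exp M (G i) (\<lambda>y. indicator S y * Q y) x"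
    by (rule Gi.nn_cond_exp_cong) (use QQ in auto)
  have e2: "AE x in M. indicator S x * nn_cond_exp M (G i) Q x = nn_cond_exp M (G i) (\<lambda>y. indicator S y * Q y) x"
    by (rule Gi.nn_cond_exp_prod) auto
  have eqF: "nn_cond_exp M (F t) = nn_cond_exp M (G i)" by (rule nn_cond_F_G[OF i])
  have Qe: "(\<lambda>y. \<integral>\<^sup>+ s. ennreal (indicator {t..} s * UU s y powr \<theta>) \<partial>lborel) = Q"
    unfolding Q_def by simp
  from e1 e2 AE_space show ?thesis unfolding eqF Qe
  proof eventually_elim
    case (elim x)
    show ?case
    proof (cases "x \<in> S")
      case False
      then have "nn_cond_exp M (G i) Q x = 0" using elim by simp
      then show ?thesis by simp
    next
      case True
      then have lt: "tt i < \<tau> x" unfolding S_def by simp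
      have "0 < aa i t x" unfolding aa_def using lt eg_lt[OF i(1,3)] kap_pos by simp
      then have "0 < YY i t x" unfolding YY_def by (simp add: add_nonneg_pos)
      then have "0 < ff i t x" unfolding ff_def by simp
      then show ?thesis using WW_eq[OF i] by simp
    qed
  qed
qed

lemma lower_t:
  assumes t0: "0 \<le> t"
  shows "AE x in M. WW t x \<ge> (1 / (\<gamma> * \<theta>) *
                 real_cond_exp M (F t)
                   (\<lambda>y. exp (- \<gamma> * t) -
                        (if \<tau> y = \<infinity> then 0 else exp (- \<gamma> * max t (real_of_ereal (\<tau> y))))) x)
                 powr \<theta>"
proof -
  obtain i where i: "i < n" "tt i \<le> ereal t" "ereal t < tt (Suc i)" using interval_ex[OF t0] by blast
  have Ve: "(\<lambda>y. exp (- \<gamma> * t) - (if \<tau> y = \<infinity> then 0 else exp (- \<gamma> * max t (real_of_ereal (\<tau> y))))) = VV t"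
    unfolding VV_def by simp
  have eqF: "real_cond_exp M (F t) = real_cond_exp M (G i)"
    by (rule real_cond_exp_sets_eq[OF subalg_F[OF t0] subalg_G[OF i(1)] sets_F_interval[OF i]])
  interpret Gi: sigma_finite_subalgebra M "G i" using sfs i by simp
  have pos: "AE x in M. 0 \<le> real_cond_exp M (G i) (VV t) x"
    by (rule Gi.real_cond_exp_pos) (use VV_bounds[OF _ t0] VV_meas in auto)
  from lower_G[OF i] pos show ?thesis unfolding Ve eqF kap_def[symmetric]
  proof eventually_elim
    case (elim x)
    have "(kap * real_cond_exp M (G i) (VV t) x) powr \<theta> \<le> YY i t x powr \<theta>"
      using elim kap_pos th by (intro powr_mono2) auto
    then show ?case using WW_eq[OF i] unfolding ff_def by simp
  qed
qed

lemma integ: "(\<integral>\<^sup>+ x. Zf 0 x \<partial>M) < \<infinity>"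
proof -
  interpret F0: sigma_finite_subalgebra M "F 0" using sfsF by simp
  have t01: "tt 0 < tt (Suc 0)" using ttmono n_pos by blast
  have e0: "ereal 0 < tt (Suc 0)" using t01 tt0 zero_ereal_def by metis
  have i0: "0 < n" "tt 0 \<le> ereal 0" "ereal 0 < tt (Suc 0)" using n_pos tt0 e0 by (auto simp: zero_ereal_def)
  have "(\<integral>\<^sup>+ x. Zf 0 x \<partial>M) = (\<integral>\<^sup>+ x. (\<lambda>_. 1) x * Zf 0 x \<partial>M)" by simp
  also have "\<dots> = (\<integral>\<^sup>+ x. (\<lambda>_. 1) x * nn_cond_exp M (F 0) (Zf 0) x \<partial>M)"
    by (rule F0.nn_cond_exp_intg[symmetric]) (auto simp: Zf_meas)
  also have "\<dots> = (\<integral>\<^sup>+ x. ennreal (WW 0 x) \<partial>M)"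
    by (rule nn_integral_cong_AE) (use main_eq[OF i0] in auto)
  also have "\<dots> \<le> (\<integral>\<^sup>+ x. ennreal (kap powr \<theta>) \<partial>M)"
  proof (rule nn_integral_mono)
    fix x
    have "WW 0 x = ff 0 0 x" using WW_eq[OF i0] .
    also have "\<dots> \<le> (kap * exp (- \<gamma> * 0)) powr \<theta>" using ff_le[of 0 0 x] i0 by (simp add: less_imp_le)
    finally show "ennreal (WW 0 x) \<le> ennreal (kap powr \<theta>)" by (intro ennreal_leI) simp
  qed
  also have "\<dots> < \<infinity>"
  proof -
    have "emeasure M (space M) < \<top>" using finite_measure.emeasure_finite[OF fin_M] by (simp add: less_top)
    then show ?thesis by (simp add: ennreal_mult_less_top)
  qed
  finally show ?thesis .
qed

lemma proper_all: "\<forall>t\<ge>0. AE x in M.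
        0 < nn_cond_exp M (F t) (\<lambda>y. \<integral>\<^sup>+ s. ennreal (indicator {t..} s * UU s y powr \<theta>) \<partial>lborel) x
        \<longrightarrow> 0 < WW t x"
proof (intro allI impI)
  fix t :: real assume "0 \<le> t"
  then show "AE x in M.
        0 < nn_cond_exp M (F t) (\<lambda>y. \<integral>\<^sup>+ s. ennreal (indicator {t..} s * UU s y powr \<theta>) \<partial>lborel) x
        \<longrightarrow> 0 < WW t x" by (rule proper_t)
qed

lemma lower_all: "\<forall>t\<ge>0. AE x in M.
               WW t x \<ge> (1 / (\<gamma> * \<theta>) *
                 real_cond_exp M (F t)
                   (\<lambda>y. exp (- \<gamma> * t) -
                        (if \<tau> y = \<infinity> then 0 else exp (- \<gamma> * max t (real_of_ereal (\<tau> y))))) x)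
                 powr \<theta>"
proof (intro allI impI)
  fix t :: real assume "0 \<le> t"
  then show "AE x in M.
               WW t x \<ge> (1 / (\<gamma> * \<theta>) *
                 real_cond_exp M (F t)
                   (\<lambda>y. exp (- \<gamma> * t) -
                        (if \<tau> y = \<infinity> then 0 else exp (- \<gamma> * max t (real_of_ereal (\<tau> y))))) x)
                 powr \<theta>" by (rule lower_t)
qed

lemma final:
  "\<exists>W. proper_EZ_solution M F \<theta>
              (\<lambda>s x. exp (- \<gamma> * s) * (if ereal s < \<tau> x then 1 else 0)) W \<and>
            (\<forall>t\<ge>0. AE x in M.
               W t x \<ge> (1 / (\<gamma> * \<theta>) *
                 real_cond_exp M (F t)
                   (\<lambda>y. exp (- \<gamma> * t) -
                        (if \<tau> y = \<infinity> then 0 else exp (- \<gamma> * max t (real_of_ereal (\<tau> y))))) x)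
                 powr \<theta>)"
proof (intro exI[of _ WW] conjI)
  have Ueq: "(\<lambda>s x. exp (- \<gamma> * s) * (if ereal s < \<tau> x then 1 else 0)) = UU"
    by (rule ext)+ (simp only: UU_def)
  have Zeq: "(\<lambda>y. \<integral>\<^sup>+ s. ennreal (indicator {t..} s * h_EZ \<theta> (UU s y) (WW s y)) \<partial>lborel) = Zf t" for t
    by (rule ext) (simp only: Zf_def HH_def)
  have eqs: "\<forall>t\<ge>0. AE x in M. ennreal (WW t x) =
        nn_cond_exp M (F t) (\<lambda>y. \<integral>\<^sup>+ s. ennreal (indicator {t..} s * h_EZ \<theta> (UU s y) (WW s y)) \<partial>lborel) x"
  proof (intro allI impI)
    fix t :: real assume t0: "0 \<le> t"
    obtain i where i: "i < n" "tt i \<le> ereal t" "ereal t < tt (Suc i)" using interval_ex[OF t0] by blast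
    show "AE x in M. ennreal (WW t x) =
        nn_cond_exp M (F t) (\<lambda>y. \<integral>\<^sup>+ s. ennreal (indicator {t..} s * h_EZ \<theta> (UU s y) (WW s y)) \<partial>lborel) x"
      unfolding Zeq by (rule main_eq[OF i])
  qed
  have int: "(\<integral>\<^sup>+ x. (\<integral>\<^sup>+ s. ennreal (indicator {0..} s * h_EZ \<theta> (UU s x) (WW s x)) \<partial>lborel) \<partial>M) < \<infinity>"
    using integ unfolding Zf_def HH_def .
  show "proper_EZ_solution M F \<theta> (\<lambda>s x. exp (- \<gamma> * s) * (if ereal s < \<tau> x then 1 else 0)) WW"
    unfolding Ueq proper_EZ_solution_def EZ_solution_def
  proof (intro conjI int eqs)
    show "\<forall>t\<ge>0. \<forall>x\<in>space M. 0 \<le> WW t x" using WW_nn by simp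
    show "cadlag_on M WW" by (rule cadlag)
    show "prog_measurable M F WW" by (rule prog)
  qed (rule proper_all)
  show "\<forall>t\<ge>0. AE x in M.
               WW t x \<ge> (1 / (\<gamma> * \<theta>) *
                 real_cond_exp M (F t)
                   (\<lambda>y. exp (- \<gamma> * t) -
                        (if \<tau> y = \<infinity> then 0 else exp (- \<gamma> * max t (real_of_ereal (\<tau> y))))) x)
                 powr \<theta>"
    by (rule lower_all)
qed

end

theorem propositionA2:
  fixes M :: "'a measure" and F :: "real \<Rightarrow> 'a measure"
    and tt :: "nat \<Rightarrow> ereal" and n :: nat and \<tau> :: "'a \<Rightarrow> ereal" and \<theta> \<gamma> :: real
  assumes "prob_space M"
    and "\<theta> > 1"
    and "filtration_on M F"
    and "tt 0 = 0" and "\<forall>i<n. tt i < tt (Suc i)" and "tt n = \<infinity>"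
    and "\<forall>s\<ge>0. \<forall>i<n. tt i \<le> ereal s \<and> ereal s < tt (Suc i) \<longrightarrow>
            sets (F s) = sets (F (real_of_ereal (tt i)))"
    and "FT_stopping_time M F tt n \<tau>"
    and "\<gamma> > 0"
  shows "\<exists>W. proper_EZ_solution M F \<theta>
              (\<lambda>s x. exp (- \<gamma> * s) * (if ereal s < \<tau> x then 1 else 0)) W \<and>
            (\<forall>t\<ge>0. AE x in M.
               W t x \<ge> (1 / (\<gamma> * \<theta>) *
                 real_cond_exp M (F t)
                   (\<lambda>y. exp (- \<gamma> * t) -
                        (if \<tau> y = \<infinity> then 0 else exp (- \<gamma> * max t (real_of_ereal (\<tau> y))))) x)
                 powr \<theta>)"
proof -
  interpret EZ M F tt n \<tau> \<theta> \<gamma> by (rule EZ.intro[OF assms])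
  show ?thesis by (rule final)
qed

end
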